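(* There is a connected graph $F$ with $D_v(F)\le v(F)-3$. Specifically, $D_v(S_{4,4})=5$.
   Context: Graphs are finite simple graphs; $v(F)$ is the number of vertices of $F$. For a graph $F$, $\mathrm{Subgr}(F)$ is the class of all graphs containing a (not necessarily induced) subgraph isomorphic to $F$. We use first-order logic of graphs with relation symbols for adjacency and equality only. $D_v(F)$ is the minimum $d$ such that there exist a first-order sentence $\Phi$ of quantifier depth $d$ and an integer $k$ such that for every connected graph $G$ with at least $k$ vertices, $G\models\Phi$ if and only if $G$ contains a subgraph isomorphic to $F$. The sparkler graph $S_{a,b}$ is obtained from the star $K_{1,a-1}$ and the path $P_b$ on $b$ vertices by adding an edge between an end vertex of $P_b$ and the central vertex of $K_{1,a-1}$ (so $S_{4,4}$ has 8 vertices). *)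

theory Defs
  imports Main
begin

text \<open>Every finite graph is isomorphic to one on natural-number vertices, and all notions
below are isomorphism invariant, so this loses no generality.\<close>

record graph =
  verts :: "nat set"
  adj   :: "nat \<Rightarrow> nat \<Rightarrow> bool"

definition is_graph :: "graph \<Rightarrow> bool" where
  "is_graph G \<longleftrightarrow> finite (verts G)
     \<and> (\<forall>u v. adj G u v \<longrightarrow> u \<in> verts G \<and> v \<in> verts G)
     \<and> (\<forall>u v. adj G u v \<longrightarrow> adj G v u)
     \<and> (\<forall>u. \<not> adj G u u)"

definition connected_graph :: "graph \<Rightarrow> bool" where
  "connected_graph G \<longleftrightarrow> verts G \<noteq> {}
     \<and> (\<forall>u\<in>verts G. \<forall>v\<in>verts G. (adj G)\<^sup>*\<^sup>* u v)"

definition contains_subgraph :: "graph \<Rightarrow> graph \<Rightarrow> bool" where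
  "contains_subgraph G F \<longleftrightarrow> (\<exists>f. inj_on f (verts F) \<and> f ` verts F \<subseteq> verts G
     \<and> (\<forall>u v. adj F u v \<longrightarrow> adj G (f u) (f v)))"

datatype fo = Adj nat nat | Eq nat nat | Neg fo | Conj fo fo | Disj fo fo
  | Ex nat fo | All nat fo

fun qdepth :: "fo \<Rightarrow> nat" where
  "qdepth (Adj x y) = 0"
| "qdepth (Eq x y) = 0"
| "qdepth (Neg \<phi>) = qdepth \<phi>"
| "qdepth (Conj \<phi> \<psi>) = max (qdepth \<phi>) (qdepth \<psi>)"
| "qdepth (Disj \<phi> \<psi>) = max (qdepth \<phi>) (qdepth \<psi>)"
| "qdepth (Ex x \<phi>) = Suc (qdepth \<phi>)"
| "qdepth (All x \<phi>) = Suc (qdepth \<phi>)"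

fun freevars :: "fo \<Rightarrow> nat set" where
  "freevars (Adj x y) = {x, y}"
| "freevars (Eq x y) = {x, y}"
| "freevars (Neg \<phi>) = freevars \<phi>"
| "freevars (Conj \<phi> \<psi>) = freevars \<phi> \<union> freevars \<psi>"
| "freevars (Disj \<phi> \<psi>) = freevars \<phi> \<union> freevars \<psi>"
| "freevars (Ex x \<phi>) = freevars \<phi> - {x}"
| "freevars (All x \<phi>) = freevars \<phi> - {x}"

definition sentence :: "fo \<Rightarrow> bool" where
  "sentence \<phi> \<longleftrightarrow> freevars \<phi> = {}"

fun sat :: "graph \<Rightarrow> (nat \<Rightarrow> nat) \<Rightarrow> fo \<Rightarrow> bool" where
  "sat G \<sigma> (Adj x y) = adj G (\<sigma> x) (\<sigma> y)"
| "sat G \<sigma> (Eq x y) = (\<sigma> x = \<sigma> y)"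
| "sat G \<sigma> (Neg \<phi>) = (\<not> sat G \<sigma> \<phi>)"
| "sat G \<sigma> (Conj \<phi> \<psi>) = (sat G \<sigma> \<phi> \<and> sat G \<sigma> \<psi>)"
| "sat G \<sigma> (Disj \<phi> \<psi>) = (sat G \<sigma> \<phi> \<or> sat G \<sigma> \<psi>)"
| "sat G \<sigma> (Ex x \<phi>) = (\<exists>v\<in>verts G. sat G (\<sigma>(x := v)) \<phi>)"
| "sat G \<sigma> (All x \<phi>) = (\<forall>v\<in>verts G. sat G (\<sigma>(x := v)) \<phi>)"

text \<open>Truth of a sentence (the assignment is irrelevant for sentences).\<close>
definition models :: "graph \<Rightarrow> fo \<Rightarrow> bool" where
  "models G \<Phi> \<longleftrightarrow> sat G (\<lambda>_. 0) \<Phi>"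

definition defines_subgr_at_depth :: "graph \<Rightarrow> nat \<Rightarrow> bool" where
  "defines_subgr_at_depth F d \<longleftrightarrow> (\<exists>\<Phi> k. sentence \<Phi> \<and> qdepth \<Phi> = d \<and>
     (\<forall>G. is_graph G \<and> connected_graph G \<and> card (verts G) \<ge> k \<longrightarrow>
          (models G \<Phi> \<longleftrightarrow> contains_subgraph G F)))"

definition Dv :: "graph \<Rightarrow> nat" where
  "Dv F = (LEAST d. defines_subgr_at_depth F d)"

text \<open>S_{a,b}: star K_{1,a-1} with centre 0 and leaves 1..a-1; path P_b on a..a+b-1;
 plus the edge between the centre 0 and the path end vertex a.\<close>
definition sparkler_edge :: "nat \<Rightarrow> nat \<Rightarrow> nat \<Rightarrow> nat \<Rightarrow> bool" where
  "sparkler_edge a b u v \<longleftrightarrow> (u = 0 \<and> 1 \<le> v \<and> v < a)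
     \<or> (a \<le> u \<and> v = u + 1 \<and> v < a + b)
     \<or> (u = 0 \<and> v = a)"

definition sparkler :: "nat \<Rightarrow> nat \<Rightarrow> graph" where
  "sparkler a b = \<lparr> verts = {0..<a+b},
     adj = (\<lambda>u v. sparkler_edge a b u v \<or> sparkler_edge a b v u) \<rparr>"

end

theory Submission
  imports Defs
begin


lemma s44I:
  assumes g: "is_graph G"
    and d: "distinct [c,l1,l2,l3,q1,q2,q3,q4]"
    and e: "adj G c l1" "adj G c l2" "adj G c l3" "adj G c q1"
           "adj G q1 q2" "adj G q2 q3" "adj G q3 q4"
  shows "contains_subgraph G (sparkler 4 4)"
proof -
  let ?xs = "[c,l1,l2,l3,q1,q2,q3,q4]"
  have gsym: "\<And>u v. adj G u v \<Longrightarrow> adj G v u" and inV: "\<And>u v. adj G u v \<Longrightarrow> u \<in> verts G \<and> v \<in> verts G"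
    using g unfolding is_graph_def by blast+
  have vs: "verts (sparkler 4 4) = {0..<8}" by (simp add: sparkler_def)
  have inj: "inj_on (nth ?xs) (verts (sparkler 4 4))"
    unfolding vs by (rule inj_on_nth[OF d]) simp
  have img: "nth ?xs ` verts (sparkler 4 4) \<subseteq> verts G"
  proof
    fix y assume "y \<in> nth ?xs ` verts (sparkler 4 4)"
    then obtain i where i: "i < 8" "y = ?xs ! i" unfolding vs by auto
    have "i = 0 \<or> i = 1 \<or> i = 2 \<or> i = 3 \<or> i = 4 \<or> i = 5 \<or> i = 6 \<or> i = 7" using i by auto
    then show "y \<in> verts G" using i inV e by auto
  qed
  have ad: "\<forall>u v. adj (sparkler 4 4) u v \<longrightarrow> adj G (?xs ! u) (?xs ! v)"
  proof (intro allI impI)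
    fix u v assume "adj (sparkler 4 4) u v"
    then have h: "sparkler_edge 4 4 u v \<or> sparkler_edge 4 4 v u" by (simp add: sparkler_def)
    have "\<And>u v. sparkler_edge 4 4 u v \<Longrightarrow> adj G (?xs ! u) (?xs ! v) \<and> adj G (?xs ! v) (?xs ! u)"
    proof -
      fix u v assume "sparkler_edge 4 4 u v"
      then have "(u = 0 \<and> v = 1) \<or> (u = 0 \<and> v = 2) \<or> (u = 0 \<and> v = 3) \<or> (u = 0 \<and> v = 4)
         \<or> (u = 4 \<and> v = 5) \<or> (u = 5 \<and> v = 6) \<or> (u = 6 \<and> v = 7)"
        unfolding sparkler_edge_def by auto
      then show "adj G (?xs ! u) (?xs ! v) \<and> adj G (?xs ! v) (?xs ! u)" using e gsym by auto
    qed
    then show "adj G (?xs ! u) (?xs ! v)" using h by blast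
  qed
  show ?thesis unfolding contains_subgraph_def using inj img ad by blast
qed



definition LB_adj :: "nat \<Rightarrow> nat \<Rightarrow> nat \<Rightarrow> bool" where
  "LB_adj N u v \<longleftrightarrow> u \<noteq> v \<and> u < 5+N \<and> v < 5+N \<and> ((u<5 \<and> v<5) \<or> (u=0 \<and> 5 \<le> v) \<or> (v=0 \<and> 5 \<le> u))"

definition H1 :: "nat \<Rightarrow> graph" where
  "H1 N = \<lparr>verts = {0..<5+N}, adj = LB_adj N\<rparr>"
definition H2 :: "nat \<Rightarrow> graph" where
  "H2 N = \<lparr>verts = {0..<5+N} - {4}, adj = (\<lambda>u v. LB_adj N u v \<and> u \<noteq> 4 \<and> v \<noteq> 4)\<rparr>"

definition tp :: "nat \<Rightarrow> nat" where
  "tp v = (if v = 0 then 0 else if v < 5 then 1 else 2)"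

definition adjT :: "nat \<Rightarrow> nat \<Rightarrow> bool" where
  "adjT s t \<longleftrightarrow> (s \<le> 1 \<and> t \<le> 1) \<or> (s = 0 \<and> t = 2) \<or> (s = 2 \<and> t = 0)"

lemma LB_adj_tp: "a \<noteq> b \<Longrightarrow> a < 5+N \<Longrightarrow> b < 5+N \<Longrightarrow> LB_adj N a b \<longleftrightarrow> adjT (tp a) (tp b)"
  unfolding LB_adj_def adjT_def tp_def by auto

lemma finite_fv: "finite (freevars \<phi>)"
  by (induction \<phi>) auto

definition Rel :: "nat \<Rightarrow> nat \<Rightarrow> nat set \<Rightarrow> (nat \<Rightarrow> nat) \<Rightarrow> (nat \<Rightarrow> nat) \<Rightarrow> bool" where
  "Rel N d S s1 s2 \<longleftrightarrow> (\<forall>x\<in>S. s1 x < 5+N \<and> s2 x < 5+N \<and> s2 x \<noteq> 4)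
    \<and> (\<forall>x\<in>S. \<forall>y\<in>S. (s1 x = s1 y \<longleftrightarrow> s2 x = s2 y) \<and> (LB_adj N (s1 x) (s1 y) \<longleftrightarrow> LB_adj N (s2 x) (s2 y)))
    \<and> (1 \<le> d \<longrightarrow> (\<forall>x\<in>S. tp (s1 x) = tp (s2 x)))"

lemma Rel_mono: "Rel N d S s1 s2 \<Longrightarrow> d' \<le> d \<Longrightarrow> S' \<subseteq> S \<Longrightarrow> Rel N d' S' s1 s2"
  unfolding Rel_def by (meson le_trans subsetD)

lemma fresh_in:
  assumes "finite A" "card A < card B" "finite B"
  shows "\<exists>v\<in>B. v \<notin> A"
proof (rule ccontr)
  assume "\<not> ?thesis" then have "B \<subseteq> A" by blast
  then have "card B \<le> card A" using assms card_mono by blast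
  then show False using assms by simp
qed

lemma ext_gen:
  assumes R: "Rel N (Suc d) F s1 s2" and x: "x \<notin> F"
    and v1: "v1 < 5+N" and v2: "v2 < 5+N" "v2 \<noteq> 4"
    and D: "\<forall>z\<in>F. (s1 z = v1 \<longleftrightarrow> s2 z = v2)"
    and E: "\<forall>z\<in>F. (LB_adj N (s1 z) v1 \<longleftrightarrow> LB_adj N (s2 z) v2) \<and> (LB_adj N v1 (s1 z) \<longleftrightarrow> LB_adj N v2 (s2 z))"
    and td: "1 \<le> d \<longrightarrow> tp v1 = tp v2"
  shows "Rel N d (insert x F) (s1(x:=v1)) (s2(x:=v2))"
proof -
  have A: "\<forall>z\<in>F. s1 z < 5+N \<and> s2 z < 5+N \<and> s2 z \<noteq> 4" using R unfolding Rel_def by blast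
  have B: "\<forall>z\<in>F. \<forall>y\<in>F. (s1 z = s1 y \<longleftrightarrow> s2 z = s2 y) \<and> (LB_adj N (s1 z) (s1 y) \<longleftrightarrow> LB_adj N (s2 z) (s2 y))"
    using R unfolding Rel_def by blast
  have C: "\<forall>z\<in>F. tp (s1 z) = tp (s2 z)" using R unfolding Rel_def by simp
  have G1: "\<forall>z\<in>insert x F. (s1(x:=v1)) z < 5+N \<and> (s2(x:=v2)) z < 5+N \<and> (s2(x:=v2)) z \<noteq> 4"
    using A v1 v2 by auto
  have G2: "\<forall>z\<in>insert x F. \<forall>y\<in>insert x F. ((s1(x:=v1)) z = (s1(x:=v1)) y \<longleftrightarrow> (s2(x:=v2)) z = (s2(x:=v2)) y)
      \<and> (LB_adj N ((s1(x:=v1)) z) ((s1(x:=v1)) y) \<longleftrightarrow> LB_adj N ((s2(x:=v2)) z) ((s2(x:=v2)) y))"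
  proof (intro ballI)
    fix z y assume z: "z \<in> insert x F" and y: "y \<in> insert x F"
    show "((s1(x:=v1)) z = (s1(x:=v1)) y \<longleftrightarrow> (s2(x:=v2)) z = (s2(x:=v2)) y)
      \<and> (LB_adj N ((s1(x:=v1)) z) ((s1(x:=v1)) y) \<longleftrightarrow> LB_adj N ((s2(x:=v2)) z) ((s2(x:=v2)) y))"
    proof (cases "z = x")
      case True
      show ?thesis
      proof (cases "y = x")
        case True then show ?thesis using \<open>z = x\<close> by (simp add: LB_adj_def)
      next
        case False then have yF: "y \<in> F" using y by simp
        have "(v1 = s1 y \<longleftrightarrow> v2 = s2 y)" using D yF by auto
        moreover have "(LB_adj N v1 (s1 y) \<longleftrightarrow> LB_adj N v2 (s2 y))" using E yF by blast
        ultimately show ?thesis using True False by simp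
      qed
    next
      case False
      then have zF: "z \<in> F" using z by simp
      show ?thesis
      proof (cases "y = x")
        case True
        have "(s1 z = v1 \<longleftrightarrow> s2 z = v2)" using D zF by auto
        moreover have "(LB_adj N (s1 z) v1 \<longleftrightarrow> LB_adj N (s2 z) v2)" using E zF by blast
        ultimately show ?thesis using True False by simp
      next
        case False2: False then have yF: "y \<in> F" using y by simp
        have "(s1 z = s1 y \<longleftrightarrow> s2 z = s2 y) \<and> (LB_adj N (s1 z) (s1 y) \<longleftrightarrow> LB_adj N (s2 z) (s2 y))"
          using B zF yF by blast
        then show ?thesis using False False2 by simp
      qed
    qed
  qed
  have G3: "1 \<le> d \<longrightarrow> (\<forall>z\<in>insert x F. tp ((s1(x:=v1)) z) = tp ((s2(x:=v2)) z))"
    using C td x by auto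
  show ?thesis unfolding Rel_def using G1 G2 G3 by blast
qed

lemma ext_common:
  assumes R: "Rel N (Suc d) F s1 s2" and x: "x \<notin> F"
    and v1: "v1 < 5+N" and v2: "v2 < 5+N" "v2 \<noteq> 4"
    and n1: "v1 \<notin> s1 ` F" and n2: "v2 \<notin> s2 ` F"
    and t: "(\<forall>z\<in>F. adjT (tp (s1 z)) (tp v1) = adjT (tp (s2 z)) (tp v2) \<and>
                    adjT (tp v1) (tp (s1 z)) = adjT (tp v2) (tp (s2 z)))"
    and td: "1 \<le> d \<longrightarrow> tp v1 = tp v2"
  shows "Rel N d (insert x F) (s1(x:=v1)) (s2(x:=v2))"
proof (rule ext_gen[OF R x v1 v2 _ _ td])
  have A: "\<forall>z\<in>F. s1 z < 5+N \<and> s2 z < 5+N \<and> s2 z \<noteq> 4" using R unfolding Rel_def by blast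
  have D: "\<forall>z\<in>F. s1 z \<noteq> v1 \<and> s2 z \<noteq> v2" using n1 n2 by blast
  then show "\<forall>z\<in>F. (s1 z = v1 \<longleftrightarrow> s2 z = v2)" by blast
  show "\<forall>z\<in>F. (LB_adj N (s1 z) v1 \<longleftrightarrow> LB_adj N (s2 z) v2) \<and> (LB_adj N v1 (s1 z) \<longleftrightarrow> LB_adj N v2 (s2 z))"
  proof
    fix z assume z: "z \<in> F"
    show "(LB_adj N (s1 z) v1 \<longleftrightarrow> LB_adj N (s2 z) v2) \<and> (LB_adj N v1 (s1 z) \<longleftrightarrow> LB_adj N v2 (s2 z))"
      using LB_adj_tp[of "s1 z" v1 N] LB_adj_tp[of "s2 z" v2 N] LB_adj_tp[of v1 "s1 z" N] LB_adj_tp[of v2 "s2 z" N]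
        A D t z v1 v2 by auto
  qed
qed

lemma ext_same:
  assumes R: "Rel N (Suc d) F s1 s2" and x: "x \<notin> F"
    and v1: "v1 < 5+N" and v2: "v2 < 5+N" "v2 \<noteq> 4"
    and n1: "v1 \<notin> s1 ` F" and n2: "v2 \<notin> s2 ` F"
    and t: "tp v1 = tp v2"
  shows "Rel N d (insert x F) (s1(x:=v1)) (s2(x:=v2))"
proof -
  have C: "\<forall>z\<in>F. tp (s1 z) = tp (s2 z)" using R unfolding Rel_def by simp
  show ?thesis by (rule ext_common[OF R x v1 v2 n1 n2]) (simp_all add: C t)
qed

lemma card_img_le: "finite F \<Longrightarrow> card (f ` F) \<le> card F"
  by (rule card_image_le)

lemma ext_fwd:
  assumes N: "4 \<le> N" and R: "Rel N (Suc d) F s1 s2" and x: "x \<notin> F" and fin: "finite F"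
    and cd: "card F + Suc d \<le> 4" and v1: "v1 < 5+N"
  shows "\<exists>v2. v2 < 5+N \<and> v2 \<noteq> 4 \<and> Rel N d (insert x F) (s1(x:=v1)) (s2(x:=v2))"
proof (cases "v1 \<in> s1 ` F")
  case True
  then obtain y where y: "y \<in> F" "s1 y = v1" by blast
  have A: "\<forall>z\<in>F. s1 z < 5+N \<and> s2 z < 5+N \<and> s2 z \<noteq> 4" using R unfolding Rel_def by blast
  have B: "\<forall>z\<in>F. \<forall>y\<in>F. (s1 z = s1 y \<longleftrightarrow> s2 z = s2 y) \<and> (LB_adj N (s1 z) (s1 y) \<longleftrightarrow> LB_adj N (s2 z) (s2 y))"
    using R unfolding Rel_def by blast
  have C: "\<forall>z\<in>F. tp (s1 z) = tp (s2 z)" using R unfolding Rel_def by simp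
  have "Rel N d (insert x F) (s1(x:=v1)) (s2(x:=s2 y))"
  proof (rule ext_gen[OF R x v1])
    show "s2 y < 5 + N" "s2 y \<noteq> 4" using A y by auto
    show "\<forall>z\<in>F. (s1 z = v1) = (s2 z = s2 y)" using B y by auto
    show "\<forall>z\<in>F. LB_adj N (s1 z) v1 = LB_adj N (s2 z) (s2 y) \<and> LB_adj N v1 (s1 z) = LB_adj N (s2 y) (s2 z)"
    proof
      fix z assume z: "z \<in> F"
      show "LB_adj N (s1 z) v1 = LB_adj N (s2 z) (s2 y) \<and> LB_adj N v1 (s1 z) = LB_adj N (s2 y) (s2 z)"
        using B[rule_format, OF z \<open>y \<in> F\<close>] B[rule_format, OF \<open>y \<in> F\<close> z] y(2) by simp
    qed
    show "1 \<le> d \<longrightarrow> tp v1 = tp (s2 y)" using C y by auto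
  qed
  then show ?thesis using A y by (intro exI[of _ "s2 y"]) auto
next
  case False
  have A: "\<forall>z\<in>F. s1 z < 5+N \<and> s2 z < 5+N \<and> s2 z \<noteq> 4" using R unfolding Rel_def by blast
  have C: "\<forall>z\<in>F. tp (s1 z) = tp (s2 z)" using R unfolding Rel_def by simp
  have cF: "card (s2 ` F) \<le> 3" using card_image_le[OF fin, of s2] cd by simp
  show ?thesis
  proof (cases "v1 = 0")
    case True
    have n2: "0 \<notin> s2 ` F"
    proof
      assume "0 \<in> s2 ` F" then obtain z where "z \<in> F" "s2 z = 0" by (auto elim: imageE)
      then have "tp (s1 z) = 0" using C by (simp add: tp_def)
      then have "s1 z = 0" by (simp add: tp_def split: if_splits)
      then show False using False True \<open>z \<in> F\<close> by (metis image_eqI)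
    qed
    have "Rel N d (insert x F) (s1(x:=v1)) (s2(x:=0))"
      by (rule ext_same[OF R x v1 _ _ False n2]) (simp_all add: True tp_def)
    then show ?thesis by (intro exI[of _ 0]) simp
  next
    case nz: False
    show ?thesis
    proof (cases "5 \<le> v1")
      case True
      have "\<exists>v\<in>{5..<5+N}. v \<notin> s2 ` F"
        by (rule fresh_in) (use cF N fin in auto)
      then obtain v2 where v2: "v2 \<in> {5..<5+N}" "v2 \<notin> s2 ` F" by blast
      have "Rel N d (insert x F) (s1(x:=v1)) (s2(x:=v2))"
        by (rule ext_same[OF R x v1 _ _ False v2(2)]) (use True v2 in \<open>auto simp: tp_def\<close>)
      then show ?thesis using v2 by (intro exI[of _ v2]) auto
    next
      case False2: False
      show ?thesis
      proof (cases "\<exists>v\<in>{1,2,3}. v \<notin> s2 ` F")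
        case True
        then obtain v2 where v2: "v2 \<in> {1,2,3}" "v2 \<notin> s2 ` F" by blast
        have "Rel N d (insert x F) (s1(x:=v1)) (s2(x:=v2))"
          by (rule ext_same[OF R x v1 _ _ False v2(2)]) (use nz False2 v2 N in \<open>auto simp: tp_def\<close>)
        then show ?thesis using v2 N by (intro exI[of _ v2]) auto
      next
        case fl: False
        then have sub: "{1,2,3} \<subseteq> s2 ` F" by blast
        have c123: "card {1,2,3::nat} = 3" by simp
        have "card {1,2,3::nat} \<le> card (s2 ` F)" by (rule card_mono) (use fin sub in auto)
        then have c3: "card (s2 ` F) = 3" "card F \<ge> 3" using cF card_image_le[OF fin, of s2] c123 by linarith+
        have eq: "s2 ` F = {1,2,3}"
          using card_subset_eq[OF finite_imageI[OF fin] sub] c3 c123 by simp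
        then have d0: "d = 0" using cd c3 by simp
        have n2: "0 \<notin> s2 ` F" using eq by auto
        have t1: "\<forall>z\<in>F. tp (s2 z) = 1"
        proof
          fix z assume "z \<in> F" then have "s2 z \<in> {1,2,3}" using eq by blast
          then show "tp (s2 z) = 1" by (auto simp: tp_def)
        qed
        have tv1: "tp v1 = 1" using nz False2 by (simp add: tp_def)
        have "\<forall>z\<in>F. adjT (tp (s1 z)) (tp v1) = adjT (tp (s2 z)) (tp 0) \<and>
                    adjT (tp v1) (tp (s1 z)) = adjT (tp 0) (tp (s2 z))"
        proof
          fix z assume z: "z \<in> F"
          have "tp (s1 z) = 1" "tp (s2 z) = 1" using C t1 z by auto
          then show "adjT (tp (s1 z)) (tp v1) = adjT (tp (s2 z)) (tp 0) \<and>
                    adjT (tp v1) (tp (s1 z)) = adjT (tp 0) (tp (s2 z))"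
            using tv1 by (simp add: tp_def adjT_def)
        qed
        then have "Rel N d (insert x F) (s1(x:=v1)) (s2(x:=0))"
          by (intro ext_common[OF R x v1 _ _ False n2]) (simp_all add: d0)
        then show ?thesis by (intro exI[of _ 0]) simp
      qed
    qed
  qed
qed



lemma ext_bwd:
  assumes N: "4 \<le> N" and R: "Rel N (Suc d) F s1 s2" and x: "x \<notin> F" and fin: "finite F"
    and cd: "card F + Suc d \<le> 4" and v2: "v2 < 5+N" "v2 \<noteq> 4"
  shows "\<exists>v1. v1 < 5+N \<and> Rel N d (insert x F) (s1(x:=v1)) (s2(x:=v2))"
proof -
  have A: "\<forall>z\<in>F. s1 z < 5+N \<and> s2 z < 5+N \<and> s2 z \<noteq> 4" using R unfolding Rel_def by blast
  have B: "\<forall>z\<in>F. \<forall>y\<in>F. (s1 z = s1 y \<longleftrightarrow> s2 z = s2 y) \<and> (LB_adj N (s1 z) (s1 y) \<longleftrightarrow> LB_adj N (s2 z) (s2 y))"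
    using R unfolding Rel_def by blast
  have C: "\<forall>z\<in>F. tp (s1 z) = tp (s2 z)" using R unfolding Rel_def by simp
  have cF: "card (s1 ` F) \<le> 3" using card_image_le[OF fin, of s1] cd by simp
  show ?thesis
  proof (cases "v2 \<in> s2 ` F")
    case True
    then obtain y where y: "y \<in> F" "s2 y = v2" by blast
    have "Rel N d (insert x F) (s1(x:=s1 y)) (s2(x:=v2))"
    proof (rule ext_gen[OF R x])
      show "s1 y < 5 + N" using A y by auto
      show "v2 < 5 + N" "v2 \<noteq> 4" using v2 by auto
      show "\<forall>z\<in>F. (s1 z = s1 y) = (s2 z = v2)" using B y by auto
      show "\<forall>z\<in>F. LB_adj N (s1 z) (s1 y) = LB_adj N (s2 z) v2 \<and> LB_adj N (s1 y) (s1 z) = LB_adj N v2 (s2 z)"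
      proof
        fix z assume z: "z \<in> F"
        show "LB_adj N (s1 z) (s1 y) = LB_adj N (s2 z) v2 \<and> LB_adj N (s1 y) (s1 z) = LB_adj N v2 (s2 z)"
          using B[rule_format, OF z \<open>y \<in> F\<close>] B[rule_format, OF \<open>y \<in> F\<close> z] y(2) by simp
      qed
      show "1 \<le> d \<longrightarrow> tp (s1 y) = tp v2" using C y by auto
    qed
    then show ?thesis using A y by (intro exI[of _ "s1 y"]) auto
  next
    case False
    show ?thesis
    proof (cases "v2 = 0")
      case True
      have n1: "0 \<notin> s1 ` F"
      proof
        assume "0 \<in> s1 ` F" then obtain z where z: "z \<in> F" "s1 z = 0" by (auto elim: imageE)
        have "tp (s2 z) = tp (s1 z)" using C z(1) by simp
        then have "tp (s2 z) = 0" using z(2) by (simp add: tp_def)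
        then have "s2 z = 0" by (simp add: tp_def split: if_splits)
        then show False using False True z(1) by (metis image_eqI)
      qed
      have "Rel N d (insert x F) (s1(x:=0)) (s2(x:=v2))"
        by (rule ext_same[OF R x _ v2 n1 False]) (simp_all add: True tp_def)
      then show ?thesis by (intro exI[of _ 0]) simp
    next
      case nz: False
      show ?thesis
      proof (cases "5 \<le> v2")
        case True
        have "\<exists>v\<in>{5..<5+N}. v \<notin> s1 ` F"
          by (rule fresh_in) (use cF N fin in auto)
        then obtain v1 where v1: "v1 \<in> {5..<5+N}" "v1 \<notin> s1 ` F" by blast
        have "Rel N d (insert x F) (s1(x:=v1)) (s2(x:=v2))"
          by (rule ext_same[OF R x _ v2 v1(2) False]) (use True v1 in \<open>auto simp: tp_def\<close>)
        then show ?thesis using v1 by (intro exI[of _ v1]) auto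
      next
        case False2: False
        have "\<exists>v\<in>{1,2,3,4}. v \<notin> s1 ` F"
          by (rule fresh_in) (use cF fin in auto)
        then obtain v1 where v1: "v1 \<in> {1,2,3,4}" "v1 \<notin> s1 ` F" by blast
        have "Rel N d (insert x F) (s1(x:=v1)) (s2(x:=v2))"
          by (rule ext_same[OF R x _ v2 v1(2) False]) (use nz False2 v1 N in \<open>auto simp: tp_def\<close>)
        then show ?thesis using v1 N by (intro exI[of _ v1]) auto
      qed
    qed
  qed
qed

lemma card_fv_sub: "freevars \<psi> \<subseteq> S \<Longrightarrow> finite S \<Longrightarrow> card (freevars \<psi>) \<le> card S"
  by (rule card_mono)

lemma inv_main:
  assumes N: "4 \<le> N"
  shows "card (freevars \<phi>) + qdepth \<phi> \<le> 4 \<Longrightarrow> Rel N (qdepth \<phi>) (freevars \<phi>) s1 s2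
     \<Longrightarrow> sat (H1 N) s1 \<phi> = sat (H2 N) s2 \<phi>"
proof (induction \<phi> arbitrary: s1 s2)
  case (Adj x y)
  then show ?case by (auto simp: H1_def H2_def Rel_def)
next
  case (Eq x y)
  then show ?case by (auto simp: Rel_def)
next
  case (Neg \<phi>)
  then show ?case by simp
next
  case (Conj \<phi> \<psi>)
  have c1: "card (freevars \<phi>) \<le> card (freevars (Conj \<phi> \<psi>))"
    by (rule card_mono) (auto simp: finite_fv)
  have c2: "card (freevars \<psi>) \<le> card (freevars (Conj \<phi> \<psi>))"
    by (rule card_mono) (auto simp: finite_fv)
  have "sat (H1 N) s1 \<phi> = sat (H2 N) s2 \<phi>"
    by (rule Conj.IH(1)) (use Conj.prems c1 in \<open>auto intro: Rel_mono\<close>)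
  moreover have "sat (H1 N) s1 \<psi> = sat (H2 N) s2 \<psi>"
    by (rule Conj.IH(2)) (use Conj.prems c2 in \<open>auto intro: Rel_mono\<close>)
  ultimately show ?case by simp
next
  case (Disj \<phi> \<psi>)
  have c1: "card (freevars \<phi>) \<le> card (freevars (Disj \<phi> \<psi>))"
    by (rule card_mono) (auto simp: finite_fv)
  have c2: "card (freevars \<psi>) \<le> card (freevars (Disj \<phi> \<psi>))"
    by (rule card_mono) (auto simp: finite_fv)
  have "sat (H1 N) s1 \<phi> = sat (H2 N) s2 \<phi>"
    by (rule Disj.IH(1)) (use Disj.prems c1 in \<open>auto intro: Rel_mono\<close>)
  moreover have "sat (H1 N) s1 \<psi> = sat (H2 N) s2 \<psi>"
    by (rule Disj.IH(2)) (use Disj.prems c2 in \<open>auto intro: Rel_mono\<close>)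
  ultimately show ?case by simp
next
  case (Ex x \<psi>)
  let ?F = "freevars \<psi> - {x}"
  have fin: "finite ?F" by (simp add: finite_fv)
  have R: "Rel N (Suc (qdepth \<psi>)) ?F s1 s2" using Ex.prems by simp
  have cd: "card ?F + Suc (qdepth \<psi>) \<le> 4" using Ex.prems by simp
  have xF: "x \<notin> ?F" by simp
  have sub: "freevars \<psi> \<subseteq> insert x ?F" by auto
  have cins: "card (insert x ?F) = Suc (card ?F)" using card_insert_disjoint[OF fin xF] .
  have cpsi: "card (freevars \<psi>) + qdepth \<psi> \<le> 4"
    using card_mono[OF _ sub] fin cins cd by simp
  have step: "sat (H1 N) (s1(x:=v1)) \<psi> = sat (H2 N) (s2(x:=v2)) \<psi>"
    if "Rel N (qdepth \<psi>) (insert x ?F) (s1(x:=v1)) (s2(x:=v2))" for v1 v2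
    by (rule Ex.IH[OF cpsi]) (rule Rel_mono[OF that order_refl sub])
  show ?case
  proof
    assume "sat (H1 N) s1 (Ex x \<psi>)"
    then obtain v1 where v1': "v1 \<in> verts (H1 N)" and v12: "sat (H1 N) (s1(x:=v1)) \<psi>" by auto
    then have v1: "v1 < 5+N" "sat (H1 N) (s1(x:=v1)) \<psi>" by (auto simp: H1_def)
    obtain v2 where v2: "v2 < 5+N" "v2 \<noteq> 4" "Rel N (qdepth \<psi>) (insert x ?F) (s1(x:=v1)) (s2(x:=v2))"
      using ext_fwd[OF N R xF fin cd v1(1)] by blast
    show "sat (H2 N) s2 (Ex x \<psi>)" using v2 step[OF v2(3)] v1(2) by (auto simp: H2_def)
  next
    assume "sat (H2 N) s2 (Ex x \<psi>)"
    then obtain v2 where v2': "v2 \<in> verts (H2 N)" and v23: "sat (H2 N) (s2(x:=v2)) \<psi>" by auto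
    then have v2: "v2 < 5+N" "v2 \<noteq> 4" "sat (H2 N) (s2(x:=v2)) \<psi>" by (auto simp: H2_def)
    obtain v1 where v1: "v1 < 5+N" "Rel N (qdepth \<psi>) (insert x ?F) (s1(x:=v1)) (s2(x:=v2))"
      using ext_bwd[OF N R xF fin cd v2(1,2)] by blast
    show "sat (H1 N) s1 (Ex x \<psi>)" using v1 step[OF v1(2)] v2(3) by (auto simp: H1_def)
  qed
next
  case (All x \<psi>)
  let ?F = "freevars \<psi> - {x}"
  have fin: "finite ?F" by (simp add: finite_fv)
  have R: "Rel N (Suc (qdepth \<psi>)) ?F s1 s2" using All.prems by simp
  have cd: "card ?F + Suc (qdepth \<psi>) \<le> 4" using All.prems by simp
  have xF: "x \<notin> ?F" by simp
  have sub: "freevars \<psi> \<subseteq> insert x ?F" by auto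
  have cins: "card (insert x ?F) = Suc (card ?F)" using card_insert_disjoint[OF fin xF] .
  have cpsi: "card (freevars \<psi>) + qdepth \<psi> \<le> 4"
    using card_mono[OF _ sub] fin cins cd by simp
  have step: "sat (H1 N) (s1(x:=v1)) \<psi> = sat (H2 N) (s2(x:=v2)) \<psi>"
    if "Rel N (qdepth \<psi>) (insert x ?F) (s1(x:=v1)) (s2(x:=v2))" for v1 v2
    by (rule All.IH[OF cpsi]) (rule Rel_mono[OF that order_refl sub])
  show ?case
  proof
    assume a: "sat (H1 N) s1 (All x \<psi>)"
    show "sat (H2 N) s2 (All x \<psi>)"
    proof -
      have "sat (H2 N) (s2(x:=v2)) \<psi>" if v2: "v2 < 5+N" "v2 \<noteq> 4" for v2
      proof -
        obtain v1 where v1: "v1 < 5+N" "Rel N (qdepth \<psi>) (insert x ?F) (s1(x:=v1)) (s2(x:=v2))"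
          using ext_bwd[OF N R xF fin cd v2(1,2)] by blast
        have "sat (H1 N) (s1(x:=v1)) \<psi>" using a v1(1) by (auto simp: H1_def)
        then show ?thesis using step[OF v1(2)] by simp
      qed
      then show ?thesis by (auto simp: H2_def)
    qed
  next
    assume a: "sat (H2 N) s2 (All x \<psi>)"
    show "sat (H1 N) s1 (All x \<psi>)"
    proof -
      have "sat (H1 N) (s1(x:=v1)) \<psi>" if v1: "v1 < 5+N" for v1
      proof -
        obtain v2 where v2: "v2 < 5+N" "v2 \<noteq> 4" "Rel N (qdepth \<psi>) (insert x ?F) (s1(x:=v1)) (s2(x:=v2))"
          using ext_fwd[OF N R xF fin cd v1] by blast
        have "sat (H2 N) (s2(x:=v2)) \<psi>" using a v2(1,2) by (auto simp: H2_def)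
        then show ?thesis using step[OF v2(3)] by simp
      qed
      then show ?thesis by (auto simp: H1_def)
    qed
  qed
qed

lemma sentence_equiv:
  assumes N: "4 \<le> N" and s: "sentence \<Phi>" and d: "qdepth \<Phi> \<le> 4"
  shows "models (H1 N) \<Phi> = models (H2 N) \<Phi>"
  unfolding models_def
  by (rule inv_main[OF N]) (use s d in \<open>auto simp: sentence_def Rel_def\<close>)



lemma s44E:
  assumes "contains_subgraph G (sparkler 4 4)"
  shows "\<exists>c l1 l2 l3 q1 q2 q3 q4. distinct [c,l1,l2,l3,q1,q2,q3,q4] \<and>
     {c,l1,l2,l3,q1,q2,q3,q4} \<subseteq> verts G \<and>
     adj G c l1 \<and> adj G c l2 \<and> adj G c l3 \<and> adj G c q1 \<and> adj G q1 q2 \<and> adj G q2 q3 \<and> adj G q3 q4"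
proof -
  obtain f where inj: "inj_on f (verts (sparkler 4 4))" and img: "f ` verts (sparkler 4 4) \<subseteq> verts G"
    and ad: "\<forall>u v. adj (sparkler 4 4) u v \<longrightarrow> adj G (f u) (f v)"
    using assms unfolding contains_subgraph_def by blast
  have vs: "verts (sparkler 4 4) = {0..<8}" by (simp add: sparkler_def)
  have e: "\<And>u v. sparkler_edge 4 4 u v \<Longrightarrow> adj G (f u) (f v)" using ad by (simp add: sparkler_def)
  have inj2: "inj_on f (set [0,1,2,3,4,5,6,7::nat])"
    by (rule inj_on_subset[OF inj]) (auto simp: vs)
  have d: "distinct (map f [0,1,2,3,4,5,6,7])"
    by (rule distinct_map[THEN iffD2]) (use inj2 in simp)
  have i: "{f 0, f 1, f 2, f 3, f 4, f 5, f 6, f 7} \<subseteq> verts G" using img vs by auto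
  show ?thesis
    apply (rule exI[of _ "f 0"], rule exI[of _ "f 1"], rule exI[of _ "f 2"], rule exI[of _ "f 3"])
    apply (rule exI[of _ "f 4"], rule exI[of _ "f 5"], rule exI[of _ "f 6"], rule exI[of _ "f 7"])
    using d i e[of 0 1] e[of 0 2] e[of 0 3] e[of 0 4] e[of 4 5] e[of 5 6] e[of 6 7]
    by (simp add: sparkler_edge_def)
qed

lemma H1_graph: "is_graph (H1 N)"
  unfolding is_graph_def H1_def LB_adj_def by auto

lemma H2_graph: "is_graph (H2 N)"
  unfolding is_graph_def H2_def LB_adj_def by auto

lemma H1_conn: "connected_graph (H1 N)"
proof -
  have a0: "(adj (H1 N))\<^sup>*\<^sup>* u 0" if "u < 5+N" for u
  proof (cases "u = 0")
    case False then have "adj (H1 N) u 0" using that by (auto simp: H1_def LB_adj_def)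
    then show ?thesis by blast
  qed simp
  have s: "adj (H1 N) u v \<Longrightarrow> adj (H1 N) v u" for u v by (auto simp: H1_def LB_adj_def)
  have a0': "(adj (H1 N))\<^sup>*\<^sup>* 0 u" if "u < 5+N" for u
  proof (cases "u = 0")
    case False then have "adj (H1 N) 0 u" using that by (auto simp: H1_def LB_adj_def)
    then show ?thesis by blast
  qed simp
  have "verts (H1 N) \<noteq> {}" by (auto simp: H1_def)
  moreover have "\<forall>u\<in>verts (H1 N). \<forall>v\<in>verts (H1 N). (adj (H1 N))\<^sup>*\<^sup>* u v"
  proof (intro ballI)
    fix u v assume "u \<in> verts (H1 N)" "v \<in> verts (H1 N)"
    then have "u < 5+N" "v < 5+N" by (auto simp: H1_def)
    then show "(adj (H1 N))\<^sup>*\<^sup>* u v" using rtranclp_trans[OF a0 a0'] by blast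
  qed
  ultimately show ?thesis unfolding connected_graph_def by blast
qed

lemma H2_conn: "connected_graph (H2 N)"
proof -
  have a0: "(adj (H2 N))\<^sup>*\<^sup>* u 0" if "u < 5+N" "u \<noteq> 4" for u
  proof (cases "u = 0")
    case False then have "adj (H2 N) u 0" using that by (auto simp: H2_def LB_adj_def)
    then show ?thesis by blast
  qed simp
  have a0': "(adj (H2 N))\<^sup>*\<^sup>* 0 u" if "u < 5+N" "u \<noteq> 4" for u
  proof (cases "u = 0")
    case False then have "adj (H2 N) 0 u" using that by (auto simp: H2_def LB_adj_def)
    then show ?thesis by blast
  qed simp
  have "0 \<in> verts (H2 N)" by (simp add: H2_def)
  then have "verts (H2 N) \<noteq> {}" by blast
  moreover have "\<forall>u\<in>verts (H2 N). \<forall>v\<in>verts (H2 N). (adj (H2 N))\<^sup>*\<^sup>* u v"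
  proof (intro ballI)
    fix u v assume "u \<in> verts (H2 N)" "v \<in> verts (H2 N)"
    then have "u < 5+N" "v < 5+N" "u \<noteq> 4" "v \<noteq> 4" by (auto simp: H2_def)
    then show "(adj (H2 N))\<^sup>*\<^sup>* u v" using rtranclp_trans[OF a0 a0'] by blast
  qed
  ultimately show ?thesis unfolding connected_graph_def by blast
qed

lemma H1_card: "card (verts (H1 N)) = 5 + N" by (simp add: H1_def)
lemma H2_card: "card (verts (H2 N)) = 4 + N" by (simp add: H2_def)

lemma H1_s44: "3 \<le> N \<Longrightarrow> contains_subgraph (H1 N) (sparkler 4 4)"
  by (rule s44I[OF H1_graph, of 0 5 6 7 1 2 3 4]) (auto simp: H1_def LB_adj_def)

lemma lt5: "(x::nat) < 5 \<Longrightarrow> x = 0 \<or> x = 1 \<or> x = 2 \<or> x = 3 \<or> x = 4" by arith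

lemma four_in_three:
  assumes "distinct [a,b,c,d::nat]" "{a,b,c,d} \<subseteq> S" "card S \<le> 3" "finite S"
  shows False
proof -
  have "card {a,b,c,d} = 4" using assms(1) by simp
  moreover have "card {a,b,c,d} \<le> card S" by (rule card_mono) (use assms in auto)
  ultimately show False using assms(3) by simp
qed

lemma H2_adjE1: "adj (H2 N) u v \<Longrightarrow> 0 < u \<Longrightarrow> u < 5 \<Longrightarrow> v \<in> {0,1,2,3} \<and> v \<noteq> u"
proof -
  assume a: "adj (H2 N) u v" "0 < u" "u < 5"
  then have "v < 5" "v \<noteq> 4" "v \<noteq> u" by (auto simp: H2_def LB_adj_def)
  then show ?thesis using lt5[of v] by blast
qed

lemma H2_adjE2: "adj (H2 N) u v \<Longrightarrow> 5 \<le> u \<Longrightarrow> v = 0"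
  by (auto simp: H2_def LB_adj_def)

lemma H2_adjE3: "adj (H2 N) u v \<Longrightarrow> v \<noteq> 0 \<Longrightarrow> u \<noteq> 0 \<Longrightarrow> u < 5 \<and> v < 5 \<and> u \<noteq> 4 \<and> v \<noteq> 4"
  by (auto simp: H2_def LB_adj_def)

lemma H2_no_s44: "\<not> contains_subgraph (H2 N) (sparkler 4 4)"
proof
  assume a: "contains_subgraph (H2 N) (sparkler 4 4)"
  obtain c l1 l2 l3 q1 q2 q3 q4 where d: "distinct [c,l1,l2,l3,q1,q2,q3,q4]"
    and e: "adj (H2 N) c l1" "adj (H2 N) c l2" "adj (H2 N) c l3" "adj (H2 N) c q1"
      "adj (H2 N) q1 q2" "adj (H2 N) q2 q3" "adj (H2 N) q3 q4"
    using s44E[OF a] by (elim exE conjE) (rule that)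
  have c0: "c = 0"
  proof (rule ccontr)
    assume c: "c \<noteq> 0"
    show False
    proof (cases "c < 5")
      case True
      have c4: "c \<noteq> 4" using e(1) by (auto simp: H2_def)
      have "{l1,l2,l3,q1} \<subseteq> {0,1,2,3} - {c}"
        using H2_adjE1[OF e(1)] H2_adjE1[OF e(2)] H2_adjE1[OF e(3)] H2_adjE1[OF e(4)] True c by blast
      moreover have "card ({0,1,2,3::nat} - {c}) \<le> 3"
      proof -
        have "c = 1 \<or> c = 2 \<or> c = 3" using lt5[OF True] c c4 by blast
        then show ?thesis by (elim disjE) auto
      qed
      moreover have "distinct [l1,l2,l3,q1]" using d by simp
      ultimately show False using four_in_three[of l1 l2 l3 q1 "{0,1,2,3} - {c}"] by blast
    next
      case False
      then have "l1 = 0" "l2 = 0" using H2_adjE2[OF e(1)] H2_adjE2[OF e(2)] by auto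
      then show False using d by simp
    qed
  qed
  have x1: "q1 \<noteq> 0" "q2 \<noteq> 0" "q3 \<noteq> 0" "q4 \<noteq> 0" using d c0 by auto
  have "q1 < 5 \<and> q2 < 5 \<and> q1 \<noteq> 4 \<and> q2 \<noteq> 4" using H2_adjE3[OF e(5)] x1 by blast
  moreover have "q3 < 5 \<and> q3 \<noteq> 4" using H2_adjE3[OF e(6)] x1 by blast
  moreover have "q4 < 5 \<and> q4 \<noteq> 4" using H2_adjE3[OF e(7)] x1 by blast
  ultimately have "{q1,q2,q3,q4} \<subseteq> {1,2,3}"
    using x1 lt5[of q1] lt5[of q2] lt5[of q3] lt5[of q4] by blast
  moreover have "distinct [q1,q2,q3,q4]" using d by simp
  ultimately show False using four_in_three[of q1 q2 q3 q4 "{1,2,3}"] by simp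
qed

lemma lower: "d \<le> 4 \<Longrightarrow> \<not> defines_subgr_at_depth (sparkler 4 4) d"
proof
  assume d: "d \<le> 4" and "defines_subgr_at_depth (sparkler 4 4) d"
  then obtain \<Phi> k where s: "sentence \<Phi>" and q: "qdepth \<Phi> = d"
    and D: "\<forall>G. is_graph G \<and> connected_graph G \<and> card (verts G) \<ge> k \<longrightarrow>
          (models G \<Phi> \<longleftrightarrow> contains_subgraph G (sparkler 4 4))"
    unfolding defines_subgr_at_depth_def by blast
  let ?N = "k + 4"
  have "models (H1 ?N) \<Phi>" using D H1_graph H1_conn H1_card H1_s44[of ?N] by auto
  moreover have "\<not> models (H2 ?N) \<Phi>" using D H2_graph H2_conn H2_card H2_no_s44 by auto
  moreover have "models (H1 ?N) \<Phi> = models (H2 ?N) \<Phi>"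
    by (rule sentence_equiv) (use s q d in auto)
  ultimately show False by simp
qed



fun within :: "graph \<Rightarrow> nat \<Rightarrow> nat \<Rightarrow> nat \<Rightarrow> bool" where
  "within G 0 u x = (x = u)"
| "within G (Suc k) u x = (within G k u x \<or> (\<exists>y. within G k u y \<and> adj G y x))"

definition path4 :: "graph \<Rightarrow> nat \<Rightarrow> bool" where
  "path4 G v \<longleftrightarrow> (\<exists>x1 x2 x3 x4. adj G v x1 \<and> adj G x1 x2 \<and> adj G x2 x3 \<and> adj G x3 x4 \<and> distinct [v,x1,x2,x3,x4])"

lemma within_mono: "within G k u x \<Longrightarrow> k \<le> m \<Longrightarrow> within G m u x"
proof (induction m)
  case 0 then show ?case by simp
next
  case (Suc m)
  then show ?case by (cases "k = Suc m") auto
qed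

lemma three_elems:
  assumes "3 \<le> card A"
  shows "\<exists>a b c. distinct [a,b,c] \<and> {a,b,c} \<subseteq> A"
proof -
  have "finite A" using assms by (metis card.infinite not_numeral_le_zero)
  have "A \<noteq> {}" using assms by auto
  then obtain a where a: "a \<in> A" by blast
  have c1: "card (A - {a}) \<ge> 2" using assms a \<open>finite A\<close> by simp
  then have "A - {a} \<noteq> {}" by (metis card.empty not_numeral_le_zero)
  then obtain b where b: "b \<in> A - {a}" by blast
  have "card (A - {a} - {b}) \<ge> 1" using c1 b \<open>finite A\<close> by simp
  then have "A - {a} - {b} \<noteq> {}" by (metis card.empty not_one_le_zero)
  then obtain c where c: "c \<in> A - {a} - {b}" by blast
  show ?thesis using a b c by (intro exI[of _ a] exI[of _ b] exI[of _ c]) auto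
qed

lemma lemA:
  assumes g: "is_graph G" and d: "7 \<le> card {w. adj G h w}" and p: "path4 G h"
  shows "contains_subgraph G (sparkler 4 4)"
proof -
  obtain x1 x2 x3 x4 where x: "adj G h x1" "adj G x1 x2" "adj G x2 x3" "adj G x3 x4" "distinct [h,x1,x2,x3,x4]"
    using p unfolding path4_def by blast
  have fin: "finite {w. adj G h w}"
    using g unfolding is_graph_def by (metis (no_types, lifting) finite_subset mem_Collect_eq subsetI)
  have "card ({w. adj G h w} - {x1,x2,x3,x4}) \<ge> card {w. adj G h w} - card {x1,x2,x3,x4}"
    by (rule diff_card_le_card_Diff) simp
  moreover have "card {x1,x2,x3,x4} \<le> 4" using card_length[of "[x1,x2,x3,x4]"] by simp
  ultimately have "card ({w. adj G h w} - {x1,x2,x3,x4}) \<ge> 3" using d by linarith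
  then obtain a b c where abc: "distinct [a,b,c]" "{a,b,c} \<subseteq> {w. adj G h w} - {x1,x2,x3,x4}"
    using three_elems by blast
  have girr: "\<And>v. \<not> adj G v v" using g unfolding is_graph_def by blast
  have ha: "adj G h a" "adj G h b" "adj G h c" using abc by auto
  have "a \<noteq> h" "b \<noteq> h" "c \<noteq> h" using ha girr by auto
  then show ?thesis
    using s44I[OF g, of h a b c x1 x2 x3 x4] abc x ha by auto
qed

lemma reach_far:
  assumes "(adj G)\<^sup>*\<^sup>* u x"
  shows "within G 3 u x \<or> (\<exists>v. within G 4 u v \<and> \<not> within G 3 u v)"
  using assms
proof (induction rule: rtranclp_induct)
  case base then show ?case using within_mono[of G 0 u u 3] by simp
next
  case (step y z)
  show ?case
  proof (cases "within G 3 u y")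
    case True
    then have "within G 4 u z" using step.hyps(2) by (simp add: numeral_eq_Suc) blast
    then show ?thesis by blast
  next
    case False then show ?thesis using step.IH by blast
  qed
qed

lemma lemB:
  assumes g: "is_graph G" and cg: "connected_graph G" and u: "u \<in> verts G"
    and y: "distinct [y1,y2,y3,y4]" "adj G u y1" "adj G u y2" "adj G u y3" "adj G u y4"
    and x: "x \<in> verts G" "\<not> within G 3 u x"
  shows "contains_subgraph G (sparkler 4 4)"
proof -
  have "(adj G)\<^sup>*\<^sup>* u x" using cg u x unfolding connected_graph_def by blast
  then obtain v where v: "within G 4 u v" "\<not> within G 3 u v" using reach_far x by blast
  have w4: "within G 4 u v = (within G 3 u v \<or> (\<exists>y. within G 3 u y \<and> adj G y v))"
    by (simp add: numeral_eq_Suc)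
  obtain p3 where p3: "within G 3 u p3" "adj G p3 v" using v w4 by blast
  have w3: "\<And>z. within G 3 u z = (within G 2 u z \<or> (\<exists>y. within G 2 u y \<and> adj G y z))"
    by (simp add: numeral_eq_Suc)
  have n3: "\<not> within G 2 u p3" using v(2) p3(2) w3[of v] by blast
  obtain p2 where p2: "within G 2 u p2" "adj G p2 p3" using p3(1) n3 w3 by blast
  have w2: "\<And>z. within G 2 u z = (within G 1 u z \<or> (\<exists>y. within G 1 u y \<and> adj G y z))"
    by (simp add: numeral_eq_Suc)
  have n2: "\<not> within G 1 u p2" using n3 p2(2) w2[of p3] by blast
  obtain p1 where p1: "within G 1 u p1" "adj G p1 p2" using p2(1) n2 w2 by blast
  have w1: "\<And>z. within G 1 u z = (z = u \<or> adj G u z)" by simp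
  have n1: "p1 \<noteq> u" using n2 p1(2) w1[of p2] by blast
  have a1: "adj G u p1" using p1(1) n1 by simp
  have np2: "\<not> within G 1 u p2" by (rule n2)
  have np3: "\<not> within G 1 u p3" "\<not> within G 2 u p3" using n3 within_mono[of G 1 u p3 2] by auto
  have nv: "\<not> within G 1 u v" "\<not> within G 2 u v" "\<not> within G 3 u v"
    using v(2) within_mono[of G 1 u v 3] within_mono[of G 2 u v 3] by auto
  have wp1: "within G 1 u p1" by (rule p1(1))
  have wp2: "within G 2 u p2" by (rule p2(1))
  have wyi: "\<And>z. adj G u z \<Longrightarrow> within G 1 u z" by simp
  have girr: "\<And>v. \<not> adj G v v" using g unfolding is_graph_def by blast
  have dd: "distinct [u,p1,p2,p3,v]"
    using n1 wp1 wp2 p3(1) np2 np3 nv within_mono[of G 1 u p1 2] by auto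
  have key: "contains_subgraph G (sparkler 4 4)"
    if l: "distinct [l1,l2,l3]" "{l1,l2,l3} \<subseteq> {y1,y2,y3,y4}" "p1 \<notin> {l1,l2,l3}" for l1 l2 l3
  proof -
    have al: "adj G u l1" "adj G u l2" "adj G u l3" using l y by auto
    have "within G 1 u l1" "within G 1 u l2" "within G 1 u l3" using al by auto
    moreover have "l1 \<noteq> u" "l2 \<noteq> u" "l3 \<noteq> u" using al girr by auto
    ultimately have "distinct [u,l1,l2,l3,p1,p2,p3,v]"
      using l dd np2 np3 nv by auto
    then show ?thesis using s44I[OF g, of u l1 l2 l3 p1 p2 p3 v] al a1 p1(2) p2(2) p3(2) by simp
  qed
  show ?thesis
  proof (cases "p1 = y1")
    case True then show ?thesis using key[of y2 y3 y4] y(1) by auto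
  next
    case F1: False
    show ?thesis
    proof (cases "p1 = y2")
      case True then show ?thesis using key[of y1 y3 y4] y(1) by auto
    next
      case F2: False
      show ?thesis
      proof (cases "p1 = y3")
        case True then show ?thesis using key[of y1 y2 y4] y(1) by auto
      next
        case F3: False
        then show ?thesis using key[of y1 y2 y3] y(1) F1 F2 by auto
      qed
    qed
  qed
qed



lemma path4I: "adj G v x1 \<Longrightarrow> adj G x1 x2 \<Longrightarrow> adj G x2 x3 \<Longrightarrow> adj G x3 x4 \<Longrightarrow> distinct [v,x1,x2,x3,x4] \<Longrightarrow> path4 G v"
  unfolding path4_def by blast

lemma within_verts: "is_graph G \<Longrightarrow> u \<in> verts G \<Longrightarrow> within G k u x \<Longrightarrow> x \<in> verts G"
proof (induction k arbitrary: x)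
  case 0 then show ?case by simp
next
  case (Suc k)
  then show ?case unfolding is_graph_def by auto
qed

lemma within_card:
  assumes g: "is_graph G" and u: "u \<in> verts G" and deg: "\<forall>v\<in>verts G. card {w. adj G v w} \<le> 6"
  shows "card {x. within G k u x} \<le> 7^k"
proof (induction k)
  case 0 then show ?case by simp
next
  case (Suc k)
  let ?S = "{x. within G k u x}"
  have finV: "finite (verts G)" using g unfolding is_graph_def by blast
  have sub: "?S \<subseteq> verts G" using within_verts[OF g u] by blast
  have finS: "finite ?S" using finite_subset[OF sub finV] .
  have eq: "{x. within G (Suc k) u x} = ?S \<union> (\<Union>y\<in>?S. {w. adj G y w})" by auto
  have "card (\<Union>y\<in>?S. {w. adj G y w}) \<le> (\<Sum>y\<in>?S. card {w. adj G y w})"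
    by (rule card_UN_le[OF finS])
  also have "\<dots> \<le> card ?S * 6"
    using sum_bounded_above[of ?S "\<lambda>y. card {w. adj G y w}" 6] deg sub by auto
  finally have c: "card (\<Union>y\<in>?S. {w. adj G y w}) \<le> card ?S * 6" .
  have "card {x. within G (Suc k) u x} \<le> card ?S + card (\<Union>y\<in>?S. {w. adj G y w})"
    unfolding eq by (rule card_Un_le)
  also have "\<dots> \<le> 7 * card ?S" using c by simp
  also have "\<dots> \<le> 7 * 7^k" using Suc.IH by simp
  finally show ?case by simp
qed

lemma big_deg:
  assumes g: "is_graph G" and u: "u \<in> verts G" and w: "\<forall>v\<in>verts G. within G 3 u v"
    and c: "344 \<le> card (verts G)"
  shows "\<exists>h\<in>verts G. 7 \<le> card {w. adj G h w}"
proof (rule ccontr)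
  assume "\<not> ?thesis"
  then have deg: "\<forall>v\<in>verts G. card {w. adj G v w} \<le> 6" by auto
  have finV: "finite (verts G)" using g unfolding is_graph_def by blast
  have "verts G \<subseteq> {x. within G 3 u x}" using w by auto
  moreover have "finite {x. within G 3 u x}"
    using finite_subset[OF _ finV] within_verts[OF g u] by blast
  ultimately have "card (verts G) \<le> card {x. within G 3 u x}" by (rule card_mono[rotated])
  also have "\<dots> \<le> 7^3" by (rule within_card[OF g u deg])
  finally show False using c by simp
qed

lemma w3cases:
  "within G 3 u h \<Longrightarrow> h = u \<or> adj G u h \<or> (\<exists>w. adj G u w \<and> adj G w h) \<or> (\<exists>w1 w2. adj G u w1 \<and> adj G w1 w2 \<and> adj G w2 h)"
  by (auto simp: numeral_eq_Suc)

lemma pick_y: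
  assumes "distinct [y1,y2,y3::nat]"
  shows "\<exists>x\<in>{y1,y2,y3}. x \<noteq> s \<and> x \<noteq> t"
  using assms by auto

context
  fixes G u p a b c y1 y2 y3
  assumes g: "is_graph G"
    and e: "adj G u p" "adj G p a" "adj G a b" "adj G b c"
    and dst: "distinct [u,p,a,b,c]"
    and y: "distinct [p,y1,y2,y3]" "adj G u y1" "adj G u y2" "adj G u y3"
begin

lemma gsym: "adj G x z \<Longrightarrow> adj G z x" using g unfolding is_graph_def by blast
lemma girr: "\<not> adj G x x" using g unfolding is_graph_def by blast

lemma ypick: "\<exists>x. adj G u x \<and> x \<noteq> p \<and> x \<noteq> s \<and> x \<noteq> t"
proof -
  obtain x where "x \<in> {y1,y2,y3}" "x \<noteq> s" "x \<noteq> t" using pick_y[of y1 y2 y3 s t] y(1) by auto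
  then show ?thesis using y by auto
qed

lemma hook1:
  assumes h: "h \<notin> {u,p,a,b,c}" and hq: "adj G h q" and q: "q \<in> {u,p,a,b,c}"
  shows "path4 G h"
proof -
  have es: "adj G p u" "adj G a p" "adj G b a" "adj G c b" using e gsym by auto
  have "q = u \<or> q = p \<or> q = a \<or> q = b \<or> q = c" using q by auto
  then show ?thesis
  proof (elim disjE)
    assume "q = u" then show ?thesis using path4I[of G h u p a b] hq e dst h by auto
  next
    assume "q = p" then show ?thesis using path4I[of G h p a b c] hq e dst h by auto
  next
    assume qa: "q = a"
    obtain x where x: "adj G u x" "x \<noteq> p" "x \<noteq> a" "x \<noteq> h" using ypick by blast
    have "x \<noteq> u" using x(1) girr by auto
    then show ?thesis using path4I[of G h a p u x] qa hq es x dst h by auto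
  next
    assume "q = b" then show ?thesis using path4I[of G h b a p u] hq es dst h by auto
  next
    assume "q = c" then show ?thesis using path4I[of G h c b a p] hq es dst h by auto
  qed
qed

lemma hook2:
  assumes h: "h \<notin> {u,p,a,b,c}" and w: "w \<notin> {u,p,a,b,c}" "w \<noteq> h"
    and hw: "adj G h w" and wq: "adj G w q" and q: "q \<in> {u,p,a,b,c}"
  shows "path4 G h"
proof -
  have es: "adj G p u" "adj G a p" "adj G b a" "adj G c b" using e gsym by auto
  have "q = u \<or> q = p \<or> q = a \<or> q = b \<or> q = c" using q by auto
  then show ?thesis
  proof (elim disjE)
    assume "q = u" then show ?thesis using path4I[of G h w u p a] hw wq e dst h w by auto
  next
    assume "q = p" then show ?thesis using path4I[of G h w p a b] hw wq e dst h w by auto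
  next
    assume "q = a" then show ?thesis using path4I[of G h w a b c] hw wq e dst h w by auto
  next
    assume "q = b" then show ?thesis using path4I[of G h w b a p] hw wq es dst h w by auto
  next
    assume "q = c" then show ?thesis using path4I[of G h w c b a] hw wq es dst h w by auto
  qed
qed

lemma key:
  assumes cg: "connected_graph G" and big: "400 \<le> card (verts G)"
    and pp: "path4 G p" and pa: "path4 G a"
  shows "contains_subgraph G (sparkler 4 4)"
proof -
  have uV: "u \<in> verts G" using g e(1) unfolding is_graph_def by blast
  show ?thesis
  proof (cases "\<exists>x\<in>verts G. \<not> within G 3 u x")
    case True
    then obtain x where "x \<in> verts G" "\<not> within G 3 u x" by blast
    then show ?thesis using lemB[OF g cg uV, of p y1 y2 y3] y e(1) by auto
  next
    case False
    then obtain h where hV: "h \<in> verts G" and hd: "7 \<le> card {w. adj G h w}"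
      using big_deg[OF g uV] big by auto
    have wh: "within G 3 u h" using False hV by blast
    have es: "adj G p u" "adj G a p" "adj G b a" "adj G c b" using e gsym by auto
    have "path4 G h"
    proof (cases "h \<in> {u,p,a,b,c}")
      case True
      then have "h = u \<or> h = p \<or> h = a \<or> h = b \<or> h = c" by auto
      then show ?thesis
      proof (elim disjE)
        assume "h = u" then show ?thesis using path4I[of G u p a b c] e dst by auto
      next
        assume "h = p" then show ?thesis using pp by simp
      next
        assume "h = a" then show ?thesis using pa by simp
      next
        assume hb: "h = b"
        obtain x where x: "adj G u x" "x \<noteq> p" "x \<noteq> a" "x \<noteq> b" using ypick by blast
        have "x \<noteq> u" using x(1) girr by auto
        then show ?thesis using path4I[of G b a p u x] hb es x dst by auto
      next
        assume "h = c" then show ?thesis using path4I[of G c b a p u] es dst by auto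
      qed
    next
      case hn: False
      have "h = u \<or> adj G u h \<or> (\<exists>w. adj G u w \<and> adj G w h) \<or> (\<exists>w1 w2. adj G u w1 \<and> adj G w1 w2 \<and> adj G w2 h)"
        using w3cases[OF wh] .
      then show ?thesis
      proof (elim disjE)
        assume "h = u" then show ?thesis using hn by simp
      next
        assume "adj G u h" then show ?thesis using hook1[OF hn, of u] gsym by auto
      next
        assume "\<exists>w. adj G u w \<and> adj G w h"
        then obtain w where w: "adj G u w" "adj G w h" by blast
        show ?thesis
        proof (cases "w \<in> {u,p,a,b,c}")
          case True then show ?thesis using hook1[OF hn, of w] w gsym by auto
        next
          case False
          have "w \<noteq> h" using w(2) girr by auto
          then show ?thesis using hook2[OF hn False, of u] w gsym by auto
        qed
      next
        assume "\<exists>w1 w2. adj G u w1 \<and> adj G w1 w2 \<and> adj G w2 h"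
        then obtain w1 w2 where w: "adj G u w1" "adj G w1 w2" "adj G w2 h" by blast
        show ?thesis
        proof (cases "w2 \<in> {u,p,a,b,c}")
          case True then show ?thesis using hook1[OF hn, of w2] w gsym by auto
        next
          case F2: False
          have w2h: "w2 \<noteq> h" using w(3) girr by auto
          show ?thesis
          proof (cases "w1 \<in> {u,p,a,b,c}")
            case True then show ?thesis using hook2[OF hn F2 w2h, of w1] w gsym by auto
          next
            case F1: False
            show ?thesis
            proof (cases "w1 = h")
              case True then show ?thesis using hook1[OF hn, of u] w gsym by auto
            next
              case False
              have "w1 \<noteq> w2" using w(2) girr by auto
              then show ?thesis using path4I[of G h w2 w1 u p] w gsym e F1 F2 w2h False hn dst by auto
            qed
          qed
        qed
      qed
    qed
    then show ?thesis using lemA[OF g hd] by simp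
  qed
qed

end



definition NE :: "nat \<Rightarrow> nat \<Rightarrow> fo" where "NE x y = Neg (Eq x y)"

definition PATHF :: "bool \<Rightarrow> fo" where
  "PATHF nb = Ex 2 (Conj (Adj 1 2) (Conj (NE 2 0) (Conj (if nb then Neg (Adj 0 2) else Eq 0 0)
     (Ex 3 (Conj (Adj 2 3) (Conj (NE 3 1) (Conj (NE 3 0)
        (Ex 4 (Conj (Adj 3 4) (Conj (NE 4 2) (Conj (NE 4 1) (NE 4 0))))))))))))"

definition ONE :: fo where
  "ONE = Disj (Conj (Adj 1 2) (Conj (Neg (Adj 1 3)) (Neg (Adj 1 4))))
          (Disj (Conj (Neg (Adj 1 2)) (Conj (Adj 1 3) (Neg (Adj 1 4))))
                (Conj (Neg (Adj 1 2)) (Conj (Neg (Adj 1 3)) (Adj 1 4))))"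

definition YSF :: "fo \<Rightarrow> fo" where
  "YSF X = Ex 2 (Ex 3 (Ex 4 (Conj (NE 2 3) (Conj (NE 2 4) (Conj (NE 3 4) (Conj (Adj 0 2) (Conj (Adj 0 3)
     (Conj (Adj 0 4) (Conj (NE 2 1) (Conj (NE 3 1) (Conj (NE 4 1) X)))))))))))"

definition PHI :: fo where
  "PHI = Ex 0 (Ex 1 (Disj (Conj (Adj 0 1) (Conj (PATHF True) (YSF (Eq 0 0))))
                         (Conj (Adj 0 1) (Conj (PATHF False) (YSF (Neg ONE))))))"

lemma PHI_sentence: "sentence PHI"
  by (auto simp: sentence_def PHI_def PATHF_def YSF_def ONE_def NE_def)

lemma PHI_depth: "qdepth PHI = 5"
  by (simp add: PHI_def PATHF_def YSF_def ONE_def NE_def)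

definition SP :: "graph \<Rightarrow> bool \<Rightarrow> nat \<Rightarrow> nat \<Rightarrow> bool" where
  "SP G nb u p \<longleftrightarrow> (\<exists>a\<in>verts G. adj G p a \<and> a \<noteq> u \<and> (nb \<longrightarrow> \<not> adj G u a) \<and>
      (\<exists>b\<in>verts G. adj G a b \<and> b \<noteq> p \<and> b \<noteq> u \<and> (\<exists>c\<in>verts G. adj G b c \<and> c \<noteq> a \<and> c \<noteq> p \<and> c \<noteq> u)))"

definition onep :: "bool \<Rightarrow> bool \<Rightarrow> bool \<Rightarrow> bool" where
  "onep x y z \<longleftrightarrow> (x \<and> \<not> y \<and> \<not> z) \<or> (\<not> x \<and> y \<and> \<not> z) \<or> (\<not> x \<and> \<not> y \<and> z)"

definition SY :: "graph \<Rightarrow> bool \<Rightarrow> nat \<Rightarrow> nat \<Rightarrow> bool" where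
  "SY G nb u p \<longleftrightarrow> (\<exists>y1\<in>verts G. \<exists>y2\<in>verts G. \<exists>y3\<in>verts G. y1 \<noteq> y2 \<and> y1 \<noteq> y3 \<and> y2 \<noteq> y3 \<and>
      adj G u y1 \<and> adj G u y2 \<and> adj G u y3 \<and> y1 \<noteq> p \<and> y2 \<noteq> p \<and> y3 \<noteq> p \<and>
      (\<not> nb \<longrightarrow> \<not> onep (adj G p y1) (adj G p y2) (adj G p y3)))"

lemma PHI_sem: "models G PHI \<longleftrightarrow> (\<exists>u\<in>verts G. \<exists>p\<in>verts G.
    (adj G u p \<and> SP G True u p \<and> SY G True u p) \<or> (adj G u p \<and> SP G False u p \<and> SY G False u p))"
  by (simp add: models_def PHI_def PATHF_def YSF_def ONE_def NE_def SP_def SY_def onep_def)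



context
  fixes G u p a b c y1 y2 y3
  assumes g: "is_graph G"
    and e: "adj G u p" "adj G p a" "adj G a b" "adj G b c"
    and dst: "distinct [u,p,a,b,c]"
    and y: "distinct [p,y1,y2,y3]" "adj G u y1" "adj G u y2" "adj G u y3"
    and cg: "connected_graph G" and big: "400 \<le> card (verts G)"
begin

lemma sym': "adj G x z \<Longrightarrow> adj G z x" using g unfolding is_graph_def by blast
lemma irr': "\<not> adj G x x" using g unfolding is_graph_def by blast

lemma KEY: "path4 G p \<Longrightarrow> path4 G a \<Longrightarrow> contains_subgraph G (sparkler 4 4)"
  by (rule key[OF g e(1) e(2) e(3) e(4) dst y(1) y(2) y(3) y(4) cg big])

lemma bc:
  assumes "adj G u b \<or> adj G u c"
  shows "contains_subgraph G (sparkler 4 4)"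
proof -
  have es: "adj G p u" "adj G a p" "adj G b a" "adj G c b" using e sym' by auto
  show ?thesis
  proof (cases "adj G u c")
    case True
    have "path4 G p" using path4I[of G p a b c u] e sym'[OF True] dst by auto
    moreover have "path4 G a" using path4I[of G a p u c b] es True dst by auto
    ultimately show ?thesis by (rule KEY)
  next
    case False
    then have ub: "adj G u b" using assms by simp
    obtain x where x: "adj G u x" "x \<noteq> p" "x \<noteq> a" "x \<noteq> b"
      using ypick[OF g e(1) e(2) e(3) e(4) dst y(1) y(2) y(3) y(4)] by blast
    have "x \<noteq> u" using x(1) irr' by auto
    then have "path4 G p" using path4I[of G p a b u x] e sym'[OF ub] x dst by auto
    moreover have "path4 G a" using path4I[of G a p u b c] es ub e dst by auto
    ultimately show ?thesis by (rule KEY)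
  qed
qed

lemma core:
  assumes ua: "adj G u a" and ux: "adj G u x" and px: "adj G p x" and ux2: "adj G u x2"
    and xn: "x \<notin> {p,a,b,c}" and x2n: "x2 \<notin> {p,a,x}"
  shows "contains_subgraph G (sparkler 4 4)"
proof -
  have es: "adj G p u" "adj G a p" "adj G b a" "adj G c b" "adj G x u" using e sym' ux by auto
  have "x \<noteq> u" "x2 \<noteq> u" using ux ux2 irr' by auto
  then have "path4 G p" using path4I[of G p x u a b] px es ua e dst xn by auto
  moreover have "path4 G a" using path4I[of G a p x u x2] es px ux2 dst xn x2n \<open>x \<noteq> u\<close> \<open>x2 \<noteq> u\<close> by auto
  ultimately show ?thesis by (rule KEY)
qed

lemma direct:
  assumes "{y1,y2,y3} \<inter> {a,b,c} = {}"
  shows "contains_subgraph G (sparkler 4 4)"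
proof -
  have "y1 \<noteq> u" "y2 \<noteq> u" "y3 \<noteq> u" using y irr' by auto
  then show ?thesis using s44I[OF g, of u y1 y2 y3 p a b c] y e dst assms by auto
qed

end

lemma upper_dir:
  assumes g: "is_graph G" and cg: "connected_graph G" and big: "400 \<le> card (verts G)"
    and m: "models G PHI"
  shows "contains_subgraph G (sparkler 4 4)"
proof -
  have girr: "\<And>x. \<not> adj G x x" using g unfolding is_graph_def by blast
  obtain u p where up: "adj G u p"
    and br: "(SP G True u p \<and> SY G True u p) \<or> (SP G False u p \<and> SY G False u p)"
    using m unfolding PHI_sem by blast
  obtain nb where sp: "SP G nb u p" and sy: "SY G nb u p" using br by blast
  obtain a b c where pa: "adj G p a" "a \<noteq> u" "nb \<longrightarrow> \<not> adj G u a" and ab: "adj G a b" "b \<noteq> p" "b \<noteq> u"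
    and bc': "adj G b c" "c \<noteq> a" "c \<noteq> p" "c \<noteq> u"
    using sp unfolding SP_def by blast
  obtain y1 y2 y3 where yy: "y1 \<noteq> y2" "y1 \<noteq> y3" "y2 \<noteq> y3" "adj G u y1" "adj G u y2" "adj G u y3"
    "y1 \<noteq> p" "y2 \<noteq> p" "y3 \<noteq> p" and on: "\<not> nb \<longrightarrow> \<not> onep (adj G p y1) (adj G p y2) (adj G p y3)"
    using sy unfolding SY_def by blast
  have dst: "distinct [u,p,a,b,c]" using up pa(1,2) ab bc' girr by (auto; metis girr)
  have ydst: "distinct [p,y1,y2,y3]" using yy by auto
  note ctx = g up pa(1) ab(1) bc'(1) dst ydst yy(4) yy(5) yy(6) cg big
  show ?thesis
  proof (cases "adj G u b \<or> adj G u c")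
    case True then show ?thesis by (rule bc[OF ctx])
  next
    case nbc: False
    show ?thesis
    proof (cases "{y1,y2,y3} \<inter> {a,b,c} = {}")
      case True then show ?thesis by (rule direct[OF ctx])
    next
      case False
      have yb: "y1 \<noteq> b" "y2 \<noteq> b" "y3 \<noteq> b" "y1 \<noteq> c" "y2 \<noteq> c" "y3 \<noteq> c" using nbc yy by auto
      then have ya: "y1 = a \<or> y2 = a \<or> y3 = a" using False by auto
      then have ua: "adj G u a" using yy by auto
      then have nnb: "\<not> nb" using pa(3) by auto
      then have no: "\<not> onep (adj G p y1) (adj G p y2) (adj G p y3)" using on by simp
      show ?thesis
      proof (cases "y1 = a")
        case True
        then have "adj G p y2 \<or> adj G p y3" using no pa(1) unfolding onep_def by auto
        then show ?thesis
        proof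
          assume "adj G p y2" then show ?thesis
            using core[OF ctx ua yy(5) _ yy(6)] True yy yb by auto
        next
          assume "adj G p y3" then show ?thesis
            using core[OF ctx ua yy(6) _ yy(5)] True yy yb by auto
        qed
      next
        case F1: False
        show ?thesis
        proof (cases "y2 = a")
          case True
          then have "adj G p y1 \<or> adj G p y3" using no pa(1) unfolding onep_def by auto
          then show ?thesis
          proof
            assume "adj G p y1" then show ?thesis
              using core[OF ctx ua yy(4) _ yy(6)] True yy yb by auto
          next
            assume "adj G p y3" then show ?thesis
              using core[OF ctx ua yy(6) _ yy(4)] True yy yb by auto
          qed
        next
          case F2: False
          then have True: "y3 = a" using ya F1 by simp
          then have "adj G p y1 \<or> adj G p y2" using no pa(1) unfolding onep_def by auto
          then show ?thesis
          proof
            assume "adj G p y1" then show ?thesis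
              using core[OF ctx ua yy(4) _ yy(5)] True yy yb by auto
          next
            assume "adj G p y2" then show ?thesis
              using core[OF ctx ua yy(5) _ yy(4)] True yy yb by auto
          qed
        qed
      qed
    qed
  qed
qed



lemma lower_dir:
  assumes g: "is_graph G" and s: "contains_subgraph G (sparkler 4 4)"
  shows "models G PHI"
proof -
  obtain c l1 l2 l3 q1 q2 q3 q4 where d: "distinct [c,l1,l2,l3,q1,q2,q3,q4]"
    and V: "{c,l1,l2,l3,q1,q2,q3,q4} \<subseteq> verts G"
    and e: "adj G c l1" "adj G c l2" "adj G c l3" "adj G c q1" "adj G q1 q2" "adj G q2 q3" "adj G q3 q4"
    using s44E[OF s] by (elim exE conjE) (rule that)
  have gsym: "\<And>x z. adj G x z \<Longrightarrow> adj G z x" using g unfolding is_graph_def by blast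
  have spT: "\<not> adj G c q2 \<Longrightarrow> SP G True c q1"
    unfolding SP_def using d V e by (intro bexI[of _ q2] conjI bexI[of _ q3] bexI[of _ q4]) auto
  have spF: "SP G False c q1"
    unfolding SP_def using d V e by (intro bexI[of _ q2] conjI bexI[of _ q3] bexI[of _ q4]) auto
  have syl: "SY G nb c q1" if "\<not> adj G q1 l1 \<and> \<not> adj G q1 l2 \<and> \<not> adj G q1 l3 \<or> nb" for nb
    unfolding SY_def using d V e that
    by (intro bexI[of _ l1] bexI[of _ l2] bexI[of _ l3]) (auto simp: onep_def)
  have cV: "c \<in> verts G" "q1 \<in> verts G" using V by auto
  show ?thesis
  proof (cases "adj G c q2")
    case False
    then show ?thesis unfolding PHI_sem using cV e(4) spT syl[of True] by blast
  next
    case True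
    have "SY G False c q1"
    proof (cases "\<not> adj G q1 l1 \<and> \<not> adj G q1 l2 \<and> \<not> adj G q1 l3")
      case True then show ?thesis using syl by blast
    next
      case False
      then have "adj G q1 l1 \<or> adj G q1 l2 \<or> adj G q1 l3" by blast
      then show ?thesis
      proof (elim disjE)
        assume h: "adj G q1 l1"
        show ?thesis unfolding SY_def using d V e True h
          by (intro bexI[of _ q2] bexI[of _ l1] bexI[of _ l2]) (auto simp: onep_def)
      next
        assume h: "adj G q1 l2"
        show ?thesis unfolding SY_def using d V e True h
          by (intro bexI[of _ q2] bexI[of _ l2] bexI[of _ l1]) (auto simp: onep_def)
      next
        assume h: "adj G q1 l3"
        show ?thesis unfolding SY_def using d V e True h
          by (intro bexI[of _ q2] bexI[of _ l3] bexI[of _ l1]) (auto simp: onep_def)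
      qed
    qed
    then show ?thesis unfolding PHI_sem using cV e(4) spF by blast
  qed
qed

lemma upper: "defines_subgr_at_depth (sparkler 4 4) 5"
  unfolding defines_subgr_at_depth_def
proof (intro exI[of _ PHI] exI[of _ 400] conjI allI impI)
  show "sentence PHI" by (rule PHI_sentence)
  show "qdepth PHI = 5" by (rule PHI_depth)
  fix G assume "is_graph G \<and> connected_graph G \<and> 400 \<le> card (verts G)"
  then show "models G PHI = contains_subgraph G (sparkler 4 4)"
    using upper_dir lower_dir by blast
qed

lemma Dv_S44: "Dv (sparkler 4 4) = 5"
  unfolding Dv_def
proof (rule Least_equality)
  show "defines_subgr_at_depth (sparkler 4 4) 5" by (rule upper)
  fix y assume "defines_subgr_at_depth (sparkler 4 4) y"
  then show "5 \<le> y" using lower[of y] by (cases "y \<le> 4") auto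
qed

lemma sym_rtc:
  assumes s: "\<And>x z. r x z \<Longrightarrow> r z x" and h: "r\<^sup>*\<^sup>* x y"
  shows "r\<^sup>*\<^sup>* y x"
  using h
proof (induction rule: rtranclp_induct)
  case base then show ?case by simp
next
  case (step y z)
  then show ?case using s by (meson converse_rtranclp_into_rtranclp)
qed

lemma S44_graph: "is_graph (sparkler 4 4)"
  unfolding is_graph_def sparkler_def sparkler_edge_def by auto

lemma S44_conn: "connected_graph (sparkler 4 4)"
proof -
  let ?r = "adj (sparkler 4 4)"
  have A: "\<And>u v. ?r u v \<longleftrightarrow> sparkler_edge 4 4 u v \<or> sparkler_edge 4 4 v u" by (simp add: sparkler_def)
  have s: "\<And>x z. ?r x z \<Longrightarrow> ?r z x" using A by blast
  have e: "?r 1 0" "?r 2 0" "?r 3 0" "?r 4 0" "?r 5 4" "?r 6 5" "?r 7 6"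
    unfolding A sparkler_edge_def by simp_all
  have t: "?r\<^sup>*\<^sup>* v 0" if "v < 8" for v
  proof -
    have "v = 0 \<or> v = 1 \<or> v = 2 \<or> v = 3 \<or> v = 4 \<or> v = 5 \<or> v = 6 \<or> v = 7" using that by auto
    then show ?thesis
    proof (elim disjE)
      assume "v = 0" then show ?thesis by simp
    next assume "v = 1" then show ?thesis using e by blast
    next assume "v = 2" then show ?thesis using e by blast
    next assume "v = 3" then show ?thesis using e by blast
    next assume "v = 4" then show ?thesis using e by blast
    next assume "v = 5" then show ?thesis using e(4,5) by (meson converse_rtranclp_into_rtranclp r_into_rtranclp)
    next assume "v = 6" then show ?thesis using e(4,5,6)
        by (meson converse_rtranclp_into_rtranclp r_into_rtranclp)
    next assume "v = 7" then show ?thesis using e(4,5,6,7)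
        by (meson converse_rtranclp_into_rtranclp r_into_rtranclp)
    qed
  qed
  have "verts (sparkler 4 4) = {0..<8}" by (simp add: sparkler_def)
  moreover have "\<forall>u\<in>{0..<8::nat}. \<forall>v\<in>{0..<8}. ?r\<^sup>*\<^sup>* u v"
  proof (intro ballI)
    fix u v :: nat assume "u \<in> {0..<8}" "v \<in> {0..<8}"
    then have "?r\<^sup>*\<^sup>* u 0" "?r\<^sup>*\<^sup>* 0 v" using t sym_rtc[OF s t] by auto
    then show "?r\<^sup>*\<^sup>* u v" by (rule rtranclp_trans)
  qed
  ultimately show ?thesis unfolding connected_graph_def by auto
qed

theorem theorem2:
  shows "(\<exists>F. is_graph F \<and> connected_graph F \<and> Dv F + 3 \<le> card (verts F))
         \<and> Dv (sparkler 4 4) = 5"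
proof
  have "card (verts (sparkler 4 4)) = 8" by (simp add: sparkler_def)
  then show "\<exists>F. is_graph F \<and> connected_graph F \<and> Dv F + 3 \<le> card (verts F)"
    using S44_graph S44_conn Dv_S44 by (intro exI[of _ "sparkler 4 4"]) simp
  show "Dv (sparkler 4 4) = 5" by (rule Dv_S44)
qed


end
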